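(* If $Z\subseteq A^+$ is an alt-induced code, then $Z^n$ is an alt-induced code for every integer $n\ge1$.
   Context: $A$ is a finite alphabet, $A^+$ the set of non-empty words; $Z^1=Z$, $Z^{n+1}=Z^nZ$ where $XY=\{xy:x\in X,y\in Y\}$. A set $Z\subseteq A^+$ is a code if every word admits at most one factorization into words of $Z$. For non-empty $X,Y\subseteq A^+$, $(X,Y)$ is an alternative code if no word of $A^+$ admits two different similar alternative factorizations on $(X,Y)$ (factorizations $u_1\cdots u_n$, $n\ge2$, $u_i\in X\cup Y$, alternating between $X$ and $Y$; similar = beginning in the same set and ending in the same set); equivalently, $XY$ is a code and the product $XY$ is unambiguous (each element of $XY$ has exactly one factorization $xy$ with $x\in X,y\in Y$). $Z$ is an alt-induced code if $Z=XY$ for some alternative code $(X,Y)$. *)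

theory Defs
  imports Main
begin

text \<open>Words over a finite alphabet 'a are lists; A^+ is the set of non-empty lists.\<close>

definition concat_set :: "'a list set \<Rightarrow> 'a list set \<Rightarrow> 'a list set" where
  "concat_set X Y = {x @ y | x y. x \<in> X \<and> y \<in> Y}"

fun set_pow :: "'a list set \<Rightarrow> nat \<Rightarrow> 'a list set" where
  "set_pow Z 0 = {[]}"
| "set_pow Z (Suc 0) = Z"
| "set_pow Z (Suc (Suc n)) = concat_set (set_pow Z (Suc n)) Z"

definition is_code :: "'a list set \<Rightarrow> bool" where
  "is_code Z \<longleftrightarrow> [] \<notin> Z \<and>
     (\<forall>us vs. set us \<subseteq> Z \<longrightarrow> set vs \<subseteq> Z \<longrightarrow> concat us = concat vs \<longrightarrow> us = vs)"

text \<open>An alternative factorization on (X,Y): a list of labelled factors (True = from X,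
  False = from Y), of length at least 2, with alternating labels.\<close>
definition alt_fact :: "'a list set \<Rightarrow> 'a list set \<Rightarrow> (bool \<times> 'a list) list \<Rightarrow> bool" where
  "alt_fact X Y fs \<longleftrightarrow> length fs \<ge> 2 \<and>
     (\<forall>i < length fs. snd (fs ! i) \<in> (if fst (fs ! i) then X else Y)) \<and>
     (\<forall>i. Suc i < length fs \<longrightarrow> fst (fs ! Suc i) = (\<not> fst (fs ! i)))"

definition alternative_code :: "'a list set \<Rightarrow> 'a list set \<Rightarrow> bool" where
  "alternative_code X Y \<longleftrightarrow> X \<noteq> {} \<and> Y \<noteq> {} \<and> [] \<notin> X \<and> [] \<notin> Y \<and>
     (\<forall>fs gs. alt_fact X Y fs \<longrightarrow> alt_fact X Y gs \<longrightarrow>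
        concat (map snd fs) = concat (map snd gs) \<longrightarrow>
        fst (hd fs) = fst (hd gs) \<longrightarrow> fst (last fs) = fst (last gs) \<longrightarrow> fs = gs)"

definition alt_induced_code :: "'a list set \<Rightarrow> bool" where
  "alt_induced_code Z \<longleftrightarrow> (\<exists>X Y. alternative_code X Y \<and> Z = concat_set X Y)"

end

theory Submission
  imports Defs
begin

fun altw :: "'a list set \<Rightarrow> 'a list set \<Rightarrow> bool \<Rightarrow> 'a list list \<Rightarrow> bool" where
  "altw X Y b [] = True"
| "altw X Y b (w#ws) = (w \<in> (if b then X else Y) \<and> altw X Y (\<not>b) ws)"

lemma altw_nth: "altw X Y b ws \<longleftrightarrow> (\<forall>i<length ws. ws!i \<in> (if (even i = b) then X else Y))"
proof (induction ws arbitrary: b)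
  case Nil then show ?case by simp
next
  case (Cons w ws)
  show ?case
  proof
    assume "altw X Y b (w#ws)"
    then show "\<forall>i<length (w#ws). (w#ws)!i \<in> (if (even i = b) then X else Y)"
      using Cons.IH[of "\<not>b"] by (auto simp: nth_Cons split: nat.splits)
  next
    assume H: "\<forall>i<length (w#ws). (w#ws)!i \<in> (if (even i = b) then X else Y)"
    have "w \<in> (if b then X else Y)" using H[rule_format, of 0] by simp
    moreover have "\<forall>i<length ws. ws!i \<in> (if (even i = (\<not>b)) then X else Y)"
    proof (intro allI impI)
      fix i assume "i < length ws"
      then show "ws!i \<in> (if (even i = (\<not>b)) then X else Y)"
        using H[rule_format, of "Suc i"] by auto
    qed
    ultimately show "altw X Y b (w#ws)" using Cons.IH[of "\<not>b"] by simp
  qed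
qed

lemma altw_append: "altw X Y b (xs@ys) \<longleftrightarrow> altw X Y b xs \<and> altw X Y (if even (length xs) then b else \<not>b) ys"
  by (induction xs arbitrary: b) auto

lemma altw_exists: "X\<noteq>{} \<Longrightarrow> Y\<noteq>{} \<Longrightarrow> \<exists>vs. altw X Y b vs \<and> length vs = k"
proof (induction k arbitrary: b)
  case 0 then show ?case by auto
next
  case (Suc k)
  obtain vs where "altw X Y (\<not>b) vs" "length vs = k" using Suc by blast
  moreover obtain w where "w \<in> (if b then X else Y)" using Suc.prems by (cases b) auto
  ultimately show ?case by (intro exI[of _ "w#vs"]) auto
qed

definition Yp :: "'a list set \<Rightarrow> 'a list set \<Rightarrow> nat \<Rightarrow> 'a list set" where
  "Yp X Y m = {concat vs | vs. altw X Y False vs \<and> length vs = 2*m+1}"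

definition ex :: "'a list set \<Rightarrow> 'a list set \<Rightarrow> nat \<Rightarrow> bool \<Rightarrow> 'a list \<Rightarrow> 'a list list" where
  "ex X Y m b w = (if b then [w] else SOME vs. altw X Y False vs \<and> length vs = 2*m+1 \<and> concat vs = w)"

fun Ex :: "'a list set \<Rightarrow> 'a list set \<Rightarrow> nat \<Rightarrow> bool \<Rightarrow> 'a list list \<Rightarrow> 'a list list" where
  "Ex X Y m b [] = []"
| "Ex X Y m b (w#ws) = ex X Y m b w @ Ex X Y m (\<not>b) ws"

lemma ex_props:
  assumes "w \<in> (if b then X else Yp X Y m)"
  shows "altw X Y b (ex X Y m b w) \<and> odd (length (ex X Y m b w)) \<and> concat (ex X Y m b w) = w
    \<and> (\<not> b \<longrightarrow> length (ex X Y m b w) = 2*m+1)"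
proof (cases b)
  case True then show ?thesis using assms by (simp add: ex_def)
next
  case False
  then have "\<exists>vs. altw X Y False vs \<and> length vs = 2*m+1 \<and> concat vs = w"
    using assms by (auto simp: Yp_def)
  from someI_ex[OF this] False show ?thesis by (simp add: ex_def)
qed

lemma Ex_props:
  "altw X (Yp X Y m) b ws \<Longrightarrow> altw X Y b (Ex X Y m b ws) \<and> concat (Ex X Y m b ws) = concat ws
     \<and> (even (length (Ex X Y m b ws)) = even (length ws)) \<and> length ws \<le> length (Ex X Y m b ws)"
proof (induction ws arbitrary: b)
  case Nil then show ?case by simp
next
  case (Cons w ws)
  have w: "w \<in> (if b then X else Yp X Y m)" and r: "altw X (Yp X Y m) (\<not>b) ws" using Cons.prems by auto
  note e = ex_props[OF w]
  note IH = Cons.IH[OF r]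
  have "odd (length (ex X Y m b w))" using e by blast
  then have pos: "length (ex X Y m b w) \<ge> 1" by (cases "length (ex X Y m b w)") auto
  show ?case using e IH pos by (auto simp: altw_append)
qed

lemma Ex_inj:
  "altw X (Yp X Y m) b ws \<Longrightarrow> altw X (Yp X Y m) b ws' \<Longrightarrow> Ex X Y m b ws = Ex X Y m b ws' \<Longrightarrow> ws = ws'"
proof (induction ws arbitrary: b ws')
  case Nil
  show ?case
  proof (cases ws')
    case (Cons w' r')
    then have "w' \<in> (if b then X else Yp X Y m)" using Nil by auto
    then have "odd (length (ex X Y m b w'))" using ex_props by blast
    then have "ex X Y m b w' \<noteq> []" by auto
    then show ?thesis using Nil Cons by simp
  qed simp
next
  case (Cons w ws)
  show ?case
  proof (cases ws')
    case Nil
    have "w \<in> (if b then X else Yp X Y m)" using Cons.prems by auto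
    then have "odd (length (ex X Y m b w))" using ex_props by blast
    then have "ex X Y m b w \<noteq> []" by auto
    then show ?thesis using Cons.prems Nil by simp
  next
    case (Cons w' r')
    have w: "w \<in> (if b then X else Yp X Y m)" and r: "altw X (Yp X Y m) (\<not>b) ws"
      using Cons.prems by auto
    have w': "w' \<in> (if b then X else Yp X Y m)" and r': "altw X (Yp X Y m) (\<not>b) r'"
      using Cons.prems \<open>ws' = w'#r'\<close> by auto
    have eq: "ex X Y m b w @ Ex X Y m (\<not>b) ws = ex X Y m b w' @ Ex X Y m (\<not>b) r'"
      using Cons.prems \<open>ws' = w'#r'\<close> by simp
    have "ex X Y m b w = ex X Y m b w' \<and> Ex X Y m (\<not>b) ws = Ex X Y m (\<not>b) r'"
    proof (cases b)
      case True then show ?thesis using eq by (simp add: ex_def)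
    next
      case False
      have "length (ex X Y m b w) = length (ex X Y m b w')"
        using ex_props[OF w] ex_props[OF w'] False by simp
      then show ?thesis using eq by simp
    qed
    then have "w = w'" "ws = r'"
      using ex_props[OF w] ex_props[OF w'] Cons.IH[OF r r'] by metis+
    then show ?thesis using \<open>ws' = w'#r'\<close> by simp
  qed
qed

lemma pow_char:
  "set_pow (concat_set X Y) (Suc k) = {concat vs | vs. altw X Y True vs \<and> length vs = 2*k+2}"
proof (induction k)
  case 0
  show ?case
  proof (rule set_eqI, rule iffI)
    fix z assume "z \<in> set_pow (concat_set X Y) (Suc 0)"
    then obtain x y where "z = x @ y" "x \<in> X" "y \<in> Y" by (auto simp: concat_set_def)
    then show "z \<in> {concat vs | vs. altw X Y True vs \<and> length vs = 2*0+2}"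
      by (intro CollectI exI[of _ "[x,y]"]) auto
  next
    fix z assume "z \<in> {concat vs | vs. altw X Y True vs \<and> length vs = 2*0+2}"
    then obtain vs where "z = concat vs" "altw X Y True vs" "length vs = 2" by auto
    then obtain x y where "vs = [x,y]" by (auto simp: numeral_2_eq_2 length_Suc_conv)
    then show "z \<in> set_pow (concat_set X Y) (Suc 0)"
      using \<open>z = concat vs\<close> \<open>altw X Y True vs\<close> by (auto simp: concat_set_def)
  qed
next
  case (Suc k)
  show ?case
  proof (rule set_eqI, rule iffI)
    fix z assume "z \<in> set_pow (concat_set X Y) (Suc (Suc k))"
    then obtain u x y where "z = u @ (x @ y)" "u \<in> set_pow (concat_set X Y) (Suc k)" "x \<in> X" "y \<in> Y"
      by (auto simp: concat_set_def)
    then obtain vs where "u = concat vs" "altw X Y True vs" "length vs = 2*k+2" using Suc by auto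
    then show "z \<in> {concat vs | vs. altw X Y True vs \<and> length vs = 2*Suc k+2}"
      using \<open>z = u @ (x @ y)\<close> \<open>x \<in> X\<close> \<open>y \<in> Y\<close>
      by (intro CollectI exI[of _ "vs@[x,y]"]) (auto simp: altw_append)
  next
    fix z assume "z \<in> {concat vs | vs. altw X Y True vs \<and> length vs = 2*Suc k+2}"
    then obtain vs where z: "z = concat vs" and a: "altw X Y True vs" and l: "length vs = 2*Suc k+2" by auto
    define us where "us = take (2*k+2) vs"
    define ts where "ts = drop (2*k+2) vs"
    have vs: "vs = us @ ts" by (simp add: us_def ts_def)
    have lu: "length us = 2*k+2" and lt: "length ts = 2" using l by (auto simp: us_def ts_def)
    then obtain x y where ts: "ts = [x,y]" by (auto simp: numeral_2_eq_2 length_Suc_conv)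
    have au: "altw X Y True us" and xy: "x \<in> X" "y \<in> Y" using a lu by (auto simp: vs ts altw_append)
    have "concat us \<in> set_pow (concat_set X Y) (Suc k)" using Suc au lu by auto
    then show "z \<in> set_pow (concat_set X Y) (Suc (Suc k))"
      using z vs ts xy by (auto simp: concat_set_def)
  qed
qed

lemma alt_fact_char:
  "alt_fact X Y fs \<longleftrightarrow> length fs \<ge> 2 \<and>
     (\<forall>i<length fs. fst (fs!i) = (even i = fst (fs!0))) \<and>
     altw X Y (fst (fs!0)) (map snd fs)"
proof -
  have A: "(\<forall>i. Suc i < length fs \<longrightarrow> fst (fs ! Suc i) = (\<not> fst (fs ! i))) \<longleftrightarrow>
        (\<forall>i<length fs. fst (fs!i) = (even i = fst (fs!0)))"
  proof
    assume H: "\<forall>i. Suc i < length fs \<longrightarrow> fst (fs ! Suc i) = (\<not> fst (fs ! i))"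
    show "\<forall>i<length fs. fst (fs!i) = (even i = fst (fs!0))"
    proof (intro allI)
      fix i show "i<length fs \<longrightarrow> fst (fs!i) = (even i = fst (fs!0))"
        by (induction i) (use H in auto)
    qed
  next
    assume H: "\<forall>i<length fs. fst (fs!i) = (even i = fst (fs!0))"
    show "\<forall>i. Suc i < length fs \<longrightarrow> fst (fs ! Suc i) = (\<not> fst (fs ! i))"
      using H by (metis Suc_lessD even_Suc)
  qed
  have B: "(\<forall>i<length fs. fst (fs!i) = (even i = fst (fs!0))) \<Longrightarrow>
      (\<forall>i < length fs. snd (fs ! i) \<in> (if fst (fs ! i) then X else Y)) \<longleftrightarrow> altw X Y (fst (fs!0)) (map snd fs)"
    by (simp add: altw_nth)
  show ?thesis unfolding alt_fact_def using A B by blast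
qed

lemma alt_code_Yp:
  assumes ac: "alternative_code X Y"
  shows "alternative_code X (Yp X Y m)"
proof -
  have ne: "X \<noteq> {}" "Y \<noteq> {}" "[] \<notin> X" "[] \<notin> Y" using ac by (auto simp: alternative_code_def)
  have uniq: "\<And>fs gs. alt_fact X Y fs \<Longrightarrow> alt_fact X Y gs \<Longrightarrow>
        concat (map snd fs) = concat (map snd gs) \<Longrightarrow>
        fst (hd fs) = fst (hd gs) \<Longrightarrow> fst (last fs) = fst (last gs) \<Longrightarrow> fs = gs"
    using ac unfolding alternative_code_def by blast
  obtain vs where vs: "altw X Y False vs" "length vs = 2*m+1" using altw_exists[OF ne(1,2)] by blast
  have "Yp X Y m \<noteq> {}" using vs by (auto simp: Yp_def)
  moreover have "[] \<notin> Yp X Y m"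
  proof
    assume "[] \<in> Yp X Y m"
    then obtain us where "altw X Y False us" "length us = 2*m+1" "concat us = []" by (auto simp: Yp_def)
    then obtain u r where "us = u#r" by (cases us) auto
    then show False using \<open>altw X Y False us\<close> \<open>concat us = []\<close> ne(4) by auto
  qed
  moreover have "fs = gs" if F: "alt_fact X (Yp X Y m) fs" and G: "alt_fact X (Yp X Y m) gs"
    and c: "concat (map snd fs) = concat (map snd gs)"
    and h: "fst (hd fs) = fst (hd gs)" and l: "fst (last fs) = fst (last gs)" for fs gs
  proof -
    define b where "b = fst (fs!0)"
    have Fc: "length fs \<ge> 2" "\<forall>i<length fs. fst (fs!i) = (even i = b)" "altw X (Yp X Y m) b (map snd fs)"
      using F unfolding alt_fact_char b_def by auto
    have hb: "fst (gs!0) = b" using h Fc(1) G unfolding b_def alt_fact_def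
      by (metis hd_conv_nth le_zero_eq list.size(3) not_numeral_le_zero)
    have Gc: "length gs \<ge> 2" "\<forall>i<length gs. fst (gs!i) = (even i = b)" "altw X (Yp X Y m) b (map snd gs)"
      using G hb unfolding alt_fact_char by auto
    have lf: "fst (last fs) = (even (length fs - 1) = b)" using Fc(2)[rule_format, of "length fs - 1"] last_conv_nth[of fs] Fc(1) by (cases fs) auto
    have lg: "fst (last gs) = (even (length gs - 1) = b)" using Gc(2)[rule_format, of "length gs - 1"] last_conv_nth[of gs] Gc(1) by (cases gs) auto
    have par: "even (length fs) = even (length gs)" using l lf lg Fc(1) Gc(1)
      by (cases "even (length fs)"; cases "even (length gs)") auto
    define E where "E = Ex X Y m b (map snd fs)"
    define E' where "E' = Ex X Y m b (map snd gs)"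
    note PE = Ex_props[OF Fc(3), folded E_def]
    note PE' = Ex_props[OF Gc(3), folded E'_def]
    define FF where "FF = map (\<lambda>i. (even i = b, E!i)) [0..<length E]"
    define GG where "GG = map (\<lambda>i. (even i = b, E'!i)) [0..<length E']"
    have sFF: "map snd FF = E" by (simp add: FF_def comp_def map_nth)
    have sGG: "map snd GG = E'" by (simp add: GG_def comp_def map_nth)
    have lE: "length E \<ge> 2" using PE Fc(1) by simp
    have lE': "length E' \<ge> 2" using PE' Gc(1) by simp
    have FF0: "fst (FF!0) = b" proof -
      have "0 < length E" using lE by linarith
      then show ?thesis unfolding FF_def by simp
    qed
    have FFi: "\<forall>i<length FF. fst (FF!i) = (even i = b)" by (simp add: FF_def)
    have FFl: "length FF = length E" by (simp add: FF_def)
    have aFF: "alt_fact X Y FF"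
      unfolding alt_fact_char using lE PE FF0 FFi FFl sFF by simp
    have GG0: "fst (GG!0) = b" proof -
      have "0 < length E'" using lE' by linarith
      then show ?thesis unfolding GG_def by simp
    qed
    have GGi: "\<forall>i<length GG. fst (GG!i) = (even i = b)" by (simp add: GG_def)
    have GGl: "length GG = length E'" by (simp add: GG_def)
    have aGG: "alt_fact X Y GG"
      unfolding alt_fact_char using lE' PE' GG0 GGi GGl sGG by simp
    have "FF = GG"
    proof (rule uniq[OF aFF aGG])
      show "concat (map snd FF) = concat (map snd GG)" using sFF sGG PE PE' c by simp
      have nF: "FF \<noteq> []" using FFl lE by (metis le_zero_eq list.size(3) zero_neq_numeral)
      have nG: "GG \<noteq> []" using GGl lE' by (metis le_zero_eq list.size(3) zero_neq_numeral)
      show "fst (hd FF) = fst (hd GG)" using FF0 GG0 nF nG by (simp add: hd_conv_nth)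
      have "fst (last FF) = (even (length E - 1) = b)"
        using nF FFl lE FFi[rule_format, of "length FF - 1"] by (simp add: last_conv_nth)
      moreover have "fst (last GG) = (even (length E' - 1) = b)"
        using nG GGl lE' GGi[rule_format, of "length GG - 1"] by (simp add: last_conv_nth)
      moreover have "even (length E) = even (length E')" using PE PE' par by simp
      ultimately show "fst (last FF) = fst (last GG)" using lE lE'
        by (cases "even (length E)"; cases "even (length E')") auto
    qed
    then have "E = E'" using sFF sGG by simp
    then have ms: "map snd fs = map snd gs" using Ex_inj[OF Fc(3) Gc(3)] E_def E'_def by simp
    then have len: "length fs = length gs" by (metis length_map)
    show "fs = gs"
    proof (rule nth_equalityI[OF len])
      fix i assume "i < length fs"
      then have "snd (fs!i) = snd (gs!i)" using ms len by (metis nth_map)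
      moreover have "fst (fs!i) = fst (gs!i)" using Fc(2) Gc(2) len \<open>i < length fs\<close> by simp
      ultimately show "fs!i = gs!i" by (simp add: prod_eq_iff)
    qed
  qed
  ultimately show ?thesis using ne unfolding alternative_code_def by blast
qed

lemma concat_Yp:
  "concat_set X (Yp X Y m) = {concat vs | vs. altw X Y True vs \<and> length vs = 2*m+2}"
proof (rule set_eqI, rule iffI)
  fix z assume "z \<in> concat_set X (Yp X Y m)"
  then obtain x vs where "z = x @ concat vs" "x \<in> X" "altw X Y False vs" "length vs = 2*m+1"
    by (auto simp: concat_set_def Yp_def)
  then show "z \<in> {concat vs | vs. altw X Y True vs \<and> length vs = 2*m+2}"
    by (intro CollectI exI[of _ "x#vs"]) auto
next
  fix z assume "z \<in> {concat vs | vs. altw X Y True vs \<and> length vs = 2*m+2}"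
  then obtain vs where "z = concat vs" "altw X Y True vs" "length vs = 2*m+2" by auto
  then obtain x r where "vs = x#r" by (cases vs) auto
  then show "z \<in> concat_set X (Yp X Y m)"
    using \<open>z = concat vs\<close> \<open>altw X Y True vs\<close> \<open>length vs = 2*m+2\<close>
    by (auto simp: concat_set_def Yp_def)
qed

theorem propositionL:
  fixes Z :: "('a::finite) list set"
  assumes "alt_induced_code Z" and "n \<ge> 1"
  shows "alt_induced_code (set_pow Z n)"
proof -
  obtain X Y where ac: "alternative_code X Y" and Z: "Z = concat_set X Y"
    using assms(1) unfolding alt_induced_code_def by blast
  obtain m where n: "n = Suc m" using assms(2) by (cases n) auto
  have "set_pow Z n = concat_set X (Yp X Y m)" unfolding Z n pow_char concat_Yp by (rule refl)
  then show ?thesis unfolding alt_induced_code_def using alt_code_Yp[OF ac] by blast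
qed

end
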